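(* Let $V,g$ be as below and let $Q_J=\tfrac43\,Q^+\nu Q^-_\tau\nu Q^+$ and $Q_R=\tfrac43\,Q^-\nu Q^+_\tau\nu Q^-$, as linear operators on $PC(V)$ (products meaning composition). Then $Q_J$ and $Q_R$ are idempotent and self-adjoint with respect to the inner product on $PC(V)$ induced by $g$; $Q_J$ has range $JC(V,g)$ and $Q_R$ has range $RC(V,g)$; and $Q_JQ_R=0$, so $JC(V,g)$ and $RC(V,g)$ are orthogonal in $PC(V)$.
   Context: $V$ is a finite-dimensional real vector space with nondegenerate symmetric bilinear form $g$. $PC(V)$ is the space of bilinear maps $T:V\times V\to L(V;V)$, identified with $V^*\otimes V^*\otimes V^*\otimes V$ and carrying the nondegenerate inner product induced by $g$. Linear involutions of $PC(V)$: $(\tau T)(u,v)=T(v,u)$; $(\alpha T)(u,v)=T(u,v)^*$ ($g$-adjoint); $\chi T$ given by $g((\chi T)(u,v)w,x)=g(T(w,x)u,v)$; $(\nu T)(u,v)w=T(w,v)u$. For such an involution $B$, $Q^\pm_B=\tfrac12(1\pm B)$. $Q^+=Q^+_\chi Q^+_\alpha Q^+_\tau$, $Q^-=Q^+_\chi Q^-_\alpha Q^-_\tau$. $\mathrm{Cycl}(T)(u,v)w=T(u,v)w+T(v,w)u+T(w,u)v$. $JC(V,g)$ (resp. $RC(V,g)$) is the set of $T$ with $\mathrm{Cycl}(T)=0$, $\chi T=T$ and $\tau T=T$ (resp. $\tau T=-T$). *)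

theory Defs
  imports "HOL-Analysis.Analysis"
begin

text \<open>The finite-dimensional real vector space V is modelled by a type
'a of class euclidean_space (its inner product is not used).  An element
T of PC(V) is a bilinear map V x V -> L(V;V), i.e. a map T u v w that is
linear in each of u, v, w.\<close>

type_synonym 'a pc = "'a \<Rightarrow> 'a \<Rightarrow> 'a \<Rightarrow> 'a"

definition nondeg_sym_form :: "('a::euclidean_space \<Rightarrow> 'a \<Rightarrow> real) \<Rightarrow> bool" where
  "nondeg_sym_form g \<longleftrightarrow> bilinear g \<and> (\<forall>x y. g x y = g y x)
     \<and> (\<forall>x. (\<forall>y. g x y = 0) \<longrightarrow> x = 0)"

definition PC :: "('a::euclidean_space) pc set" where
  "PC = {T. (\<forall>v w. linear (\<lambda>u. T u v w)) \<and> (\<forall>u w. linear (\<lambda>v. T u v w))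
             \<and> (\<forall>u v. linear (T u v))}"

definition pc_comb :: "real \<Rightarrow> ('a::real_vector) pc \<Rightarrow> real \<Rightarrow> 'a pc \<Rightarrow> 'a pc" where
  "pc_comb a T b S = (\<lambda>u v w. a *\<^sub>R T u v w + b *\<^sub>R S u v w)"

definition gadj :: "('a \<Rightarrow> 'a \<Rightarrow> real) \<Rightarrow> ('a \<Rightarrow> 'a) \<Rightarrow> 'a \<Rightarrow> 'a" where
  "gadj g A y = (THE z. \<forall>x. g z x = g y (A x))"

definition tau_op :: "'a pc \<Rightarrow> 'a pc" where
  "tau_op T = (\<lambda>u v. T v u)"

definition alpha_op :: "('a \<Rightarrow> 'a \<Rightarrow> real) \<Rightarrow> 'a pc \<Rightarrow> 'a pc" where
  "alpha_op g T = (\<lambda>u v. gadj g (T u v))"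

definition chi_op :: "('a \<Rightarrow> 'a \<Rightarrow> real) \<Rightarrow> 'a pc \<Rightarrow> 'a pc" where
  "chi_op g T = (\<lambda>u v w. THE z. \<forall>x. g z x = g (T w x u) v)"

definition nu_op :: "'a pc \<Rightarrow> 'a pc" where
  "nu_op T = (\<lambda>u v w. T w v u)"

definition QP :: "(('a::real_vector) pc \<Rightarrow> 'a pc) \<Rightarrow> 'a pc \<Rightarrow> 'a pc" where
  "QP B T = pc_comb (1/2) T (1/2) (B T)"

definition QM :: "(('a::real_vector) pc \<Rightarrow> 'a pc) \<Rightarrow> 'a pc \<Rightarrow> 'a pc" where
  "QM B T = pc_comb (1/2) T (-(1/2)) (B T)"

definition Qplus :: "('a::real_vector \<Rightarrow> 'a \<Rightarrow> real) \<Rightarrow> 'a pc \<Rightarrow> 'a pc" where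
  "Qplus g = QP (chi_op g) \<circ> QP (alpha_op g) \<circ> QP tau_op"

definition Qminus :: "('a::real_vector \<Rightarrow> 'a \<Rightarrow> real) \<Rightarrow> 'a pc \<Rightarrow> 'a pc" where
  "Qminus g = QP (chi_op g) \<circ> QM (alpha_op g) \<circ> QM tau_op"

definition QJ :: "('a::real_vector \<Rightarrow> 'a \<Rightarrow> real) \<Rightarrow> 'a pc \<Rightarrow> 'a pc" where
  "QJ g T = pc_comb (4/3) ((Qplus g \<circ> nu_op \<circ> QM tau_op \<circ> nu_op \<circ> Qplus g) T) 0 T"

definition QR :: "('a::real_vector \<Rightarrow> 'a \<Rightarrow> real) \<Rightarrow> 'a pc \<Rightarrow> 'a pc" where
  "QR g T = pc_comb (4/3) ((Qminus g \<circ> nu_op \<circ> QP tau_op \<circ> nu_op \<circ> Qminus g) T) 0 T"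

definition Cycl :: "('a::real_vector) pc \<Rightarrow> 'a pc" where
  "Cycl T = (\<lambda>u v w. T u v w + T v w u + T w u v)"

definition JC :: "('a::euclidean_space \<Rightarrow> 'a \<Rightarrow> real) \<Rightarrow> 'a pc set" where
  "JC g = {T \<in> PC. Cycl T = (\<lambda>u v w. 0) \<and> chi_op g T = T \<and> tau_op T = T}"

definition RC :: "('a::euclidean_space \<Rightarrow> 'a \<Rightarrow> real) \<Rightarrow> 'a pc set" where
  "RC g = {T \<in> PC. Cycl T = (\<lambda>u v w. 0) \<and> chi_op g T = T \<and> tau_op T = (\<lambda>u v w. - T u v w)}"

definition gdual :: "('a::euclidean_space \<Rightarrow> 'a \<Rightarrow> real) \<Rightarrow> 'a \<Rightarrow> 'a" where
  "gdual g i = (THE x. \<forall>j\<in>Basis. g x j = (if j = i then 1 else 0))"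

text \<open>Inner product on PC(V) induced by g (full contraction of all four
indices with g / its inverse); independent of the basis used.\<close>
definition pc_inner :: "('a::euclidean_space \<Rightarrow> 'a \<Rightarrow> real) \<Rightarrow> 'a pc \<Rightarrow> 'a pc \<Rightarrow> real" where
  "pc_inner g T S = (\<Sum>i\<in>Basis. \<Sum>j\<in>Basis. \<Sum>k\<in>Basis.
       g (T i j k) (S (gdual g i) (gdual g j) (gdual g k)))"

end

theory Submission
  imports Defs
begin


lemma nd_bil: "nondeg_sym_form g \<Longrightarrow> bilinear g" by (simp add: nondeg_sym_form_def)
lemma nd_sym: "nondeg_sym_form g \<Longrightarrow> g x y = g y x" by (simp add: nondeg_sym_form_def)
lemma nd_lin1: "nondeg_sym_form g \<Longrightarrow> linear (\<lambda>x. g x y)"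
  by (simp add: nondeg_sym_form_def bilinear_def)
lemma nd_lin2: "nondeg_sym_form g \<Longrightarrow> linear (\<lambda>y. g x y)"
  by (simp add: nondeg_sym_form_def bilinear_def)

lemma nd_eq:
  assumes g: "nondeg_sym_form g" and h: "\<And>x. g p x = g q x"
  shows "p = q"
proof -
  have "\<forall>x. g (p - q) x = 0"
    using h real_vector.linear_diff[OF nd_lin1[OF g]] by simp
  then have "p - q = 0" using g unfolding nondeg_sym_form_def by blast
  then show ?thesis by simp
qed

lemma rep_linear:
  assumes g: "nondeg_sym_form g" and h: "\<And>x. linear (\<lambda>u. g (F u) x)"
  shows "linear F"
proof (rule linearI)
  fix u v show "F (u + v) = F u + F v"
    by (rule nd_eq[OF g]) (simp add: real_vector.linear_add[OF h] real_vector.linear_add[OF nd_lin1[OF g]])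
next
  fix r u show "F (r *\<^sub>R u) = r *\<^sub>R F u"
    by (rule nd_eq[OF g]) (simp add: linear_cmul[OF h] linear_cmul[OF nd_lin1[OF g]])
qed

lemma riesz:
  fixes g :: "'a::euclidean_space \<Rightarrow> 'a \<Rightarrow> real"
  assumes g: "nondeg_sym_form g" and f: "linear f"
  shows "\<exists>!z. \<forall>x. g z x = f x"
proof -
  define \<Phi> where "\<Phi> z = (\<Sum>b\<in>Basis. g z b *\<^sub>R b)" for z
  have lin: "linear \<Phi>" unfolding \<Phi>_def
    by (rule linearI) (simp_all add: real_vector.linear_add[OF nd_lin1[OF g]] linear_cmul[OF nd_lin1[OF g]]
        scaleR_add_left sum.distrib scaleR_sum_right)
  have inn: "\<Phi> z \<bullet> x = g z x" for z x
  proof -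
    have "g z x = g z (\<Sum>b\<in>Basis. (x \<bullet> b) *\<^sub>R b)" by (simp add: euclidean_representation)
    also have "\<dots> = (\<Sum>b\<in>Basis. (x \<bullet> b) * g z b)"
      by (simp add: real_vector.linear_sum[OF nd_lin2[OF g]] linear_cmul[OF nd_lin2[OF g]])
    finally show ?thesis by (simp add: \<Phi>_def inner_sum_right mult.commute inner_commute)
  qed
  have "inj \<Phi>"
  proof (rule injI)
    fix x y assume "\<Phi> x = \<Phi> y"
    then show "x = y" by (intro nd_eq[OF g]) (metis inn)
  qed
  then have "surj \<Phi>" using linear_injective_imp_surjective[OF lin] by simp
  define w where "w = (\<Sum>b\<in>Basis. f b *\<^sub>R b)"
  obtain z where z: "\<Phi> z = w" using \<open>surj \<Phi>\<close> by (metis surjD)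
  have zf: "g z x = f x" for x
  proof -
    have "f x = f (\<Sum>b\<in>Basis. (x \<bullet> b) *\<^sub>R b)" by (simp add: euclidean_representation)
    also have "\<dots> = w \<bullet> x"
      by (simp add: real_vector.linear_sum[OF f] linear_cmul[OF f] w_def inner_sum_left inner_sum_right inner_commute mult.commute)
    finally show ?thesis using inn[of z x] z by simp
  qed
  moreover have "z' = z" if "\<forall>x. g z' x = f x" for z'
    using that zf by (intro nd_eq[OF g]) simp
  ultimately show ?thesis by blast
qed

lemma riesz_the:
  fixes g :: "'a::euclidean_space \<Rightarrow> 'a \<Rightarrow> real"
  assumes g: "nondeg_sym_form g" and f: "linear f"
  shows "g (THE z. \<forall>x. g z x = f x) x = f x"
  using theI'[OF riesz[OF g f]] by blast

type_synonym 'a lf = "'a \<Rightarrow> 'a \<Rightarrow> 'a \<Rightarrow> 'a \<Rightarrow> real"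

definition L :: "('a \<Rightarrow> 'a \<Rightarrow> real) \<Rightarrow> 'a pc \<Rightarrow> 'a lf" where
  "L g T = (\<lambda>a b c d. g (T a b c) d)"

definition ltau :: "'a lf \<Rightarrow> 'a lf" where "ltau f = (\<lambda>a b c d. f b a c d)"
definition lalpha :: "'a lf \<Rightarrow> 'a lf" where "lalpha f = (\<lambda>a b c d. f a b d c)"
definition lchi :: "'a lf \<Rightarrow> 'a lf" where "lchi f = (\<lambda>a b c d. f c d a b)"
definition lnu :: "'a lf \<Rightarrow> 'a lf" where "lnu f = (\<lambda>a b c d. f c b a d)"
definition lcomb :: "real \<Rightarrow> 'a lf \<Rightarrow> real \<Rightarrow> 'a lf \<Rightarrow> 'a lf" where
  "lcomb x f y h = (\<lambda>a b c d. x * f a b c d + y * h a b c d)"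
definition lQP :: "('a lf \<Rightarrow> 'a lf) \<Rightarrow> 'a lf \<Rightarrow> 'a lf" where "lQP B f = lcomb (1/2) f (1/2) (B f)"
definition lQM :: "('a lf \<Rightarrow> 'a lf) \<Rightarrow> 'a lf \<Rightarrow> 'a lf" where "lQM B f = lcomb (1/2) f (-(1/2)) (B f)"
definition lQplus :: "'a lf \<Rightarrow> 'a lf" where "lQplus = lQP lchi \<circ> lQP lalpha \<circ> lQP ltau"
definition lQminus :: "'a lf \<Rightarrow> 'a lf" where "lQminus = lQP lchi \<circ> lQM lalpha \<circ> lQM ltau"
definition lQJ :: "'a lf \<Rightarrow> 'a lf" where
  "lQJ f = lcomb (4/3) ((lQplus \<circ> lnu \<circ> lQM ltau \<circ> lnu \<circ> lQplus) f) 0 f"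
definition lQR :: "'a lf \<Rightarrow> 'a lf" where
  "lQR f = lcomb (4/3) ((lQminus \<circ> lnu \<circ> lQP ltau \<circ> lnu \<circ> lQminus) f) 0 f"
definition lcyc :: "'a lf \<Rightarrow> 'a lf" where "lcyc f = (\<lambda>a b c d. f a b c d + f b c a d + f c a b d)"

lemma L_inj:
  assumes g: "nondeg_sym_form g" and h: "L g T = L g S" shows "T = S"
proof (intro ext)
  fix a b c show "T a b c = S a b c"
    by (rule nd_eq[OF g]) (metis h L_def)
qed

lemma PC_iff: "T \<in> PC \<longleftrightarrow> (\<forall>v w. linear (\<lambda>u. T u v w)) \<and> (\<forall>u w. linear (\<lambda>v. T u v w))
             \<and> (\<forall>u v. linear (T u v))" by (simp add: PC_def)

lemma lin_g1: "nondeg_sym_form g \<Longrightarrow> linear h \<Longrightarrow> linear (\<lambda>x. g (h x) v)"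
  by (rule linearI) (simp_all add: real_vector.linear_add linear_cmul real_vector.linear_add[OF nd_lin1] linear_cmul[OF nd_lin1])
lemma lin_g2: "nondeg_sym_form g \<Longrightarrow> linear h \<Longrightarrow> linear (\<lambda>x. g v (h x))"
  by (rule linearI) (simp_all add: real_vector.linear_add linear_cmul real_vector.linear_add[OF nd_lin2] linear_cmul[OF nd_lin2])

lemma chi_char:
  fixes g :: "'a::euclidean_space \<Rightarrow> 'a \<Rightarrow> real"
  assumes g: "nondeg_sym_form g" and T: "T \<in> PC"
  shows "g (chi_op g T u v w) x = g (T w x u) v"
proof -
  have "linear (\<lambda>x. g (T w x u) v)" using T by (intro lin_g1[OF g]) (simp add: PC_iff)
  from riesz_the[OF g this] show ?thesis by (simp add: chi_op_def)
qed

lemma alpha_char: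
  fixes g :: "'a::euclidean_space \<Rightarrow> 'a \<Rightarrow> real"
  assumes g: "nondeg_sym_form g" and T: "T \<in> PC"
  shows "g (alpha_op g T u v w) x = g (T u v x) w"
proof -
  have "linear (\<lambda>x. g w (T u v x))" using T by (intro lin_g2[OF g]) (simp add: PC_iff)
  from riesz_the[OF g this] show ?thesis by (simp add: alpha_op_def gadj_def nd_sym[OF g])
qed

lemma chi_PC:
  fixes g :: "'a::euclidean_space \<Rightarrow> 'a \<Rightarrow> real"
  assumes g: "nondeg_sym_form g" and T: "T \<in> PC"
  shows "chi_op g T \<in> PC"
  unfolding PC_iff
proof (intro conjI allI)
  fix v w show "linear (\<lambda>u. chi_op g T u v w)"
    using T by (intro rep_linear[OF g]) (simp add: chi_char[OF g T] lin_g1[OF g] PC_iff)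
next
  fix u w show "linear (\<lambda>v. chi_op g T u v w)"
    using T by (intro rep_linear[OF g]) (simp add: chi_char[OF g T] nd_lin2[OF g])
next
  fix u v show "linear (chi_op g T u v)"
    using T by (intro rep_linear[OF g]) (simp add: chi_char[OF g T] lin_g1[OF g] PC_iff)
qed

lemma alpha_PC:
  fixes g :: "'a::euclidean_space \<Rightarrow> 'a \<Rightarrow> real"
  assumes g: "nondeg_sym_form g" and T: "T \<in> PC"
  shows "alpha_op g T \<in> PC"
  unfolding PC_iff
proof (intro conjI allI)
  fix v w show "linear (\<lambda>u. alpha_op g T u v w)"
    using T by (intro rep_linear[OF g]) (simp add: alpha_char[OF g T] lin_g1[OF g] PC_iff)
next
  fix u w show "linear (\<lambda>v. alpha_op g T u v w)"
    using T by (intro rep_linear[OF g]) (simp add: alpha_char[OF g T] lin_g1[OF g] PC_iff)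
next
  fix u v show "linear (alpha_op g T u v)"
    using T by (intro rep_linear[OF g]) (simp add: alpha_char[OF g T] nd_lin2[OF g])
qed

lemma tau_PC: "T \<in> PC \<Longrightarrow> tau_op T \<in> PC"
  by (simp add: PC_iff tau_op_def)
lemma nu_PC: "T \<in> PC \<Longrightarrow> nu_op T \<in> PC"
  by (simp add: PC_iff nu_op_def)
lemma comb_PC: "T \<in> PC \<Longrightarrow> S \<in> PC \<Longrightarrow> pc_comb x T y S \<in> PC"
proof -
  assume T: "T \<in> PC" and S: "S \<in> PC"
  have a: "\<And>v w. linear (\<lambda>u. T u v w)" "\<And>u w. linear (\<lambda>v. T u v w)" "\<And>u v. linear (T u v)"
    "\<And>v w. linear (\<lambda>u. S u v w)" "\<And>u w. linear (\<lambda>v. S u v w)" "\<And>u v. linear (S u v)"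
    using T S by (auto simp: PC_iff)
  show ?thesis unfolding PC_iff pc_comb_def
    by (intro conjI allI linearI)
     (simp_all add: real_vector.linear_add[OF a(1)] real_vector.linear_add[OF a(2)] real_vector.linear_add[OF a(3)]
      real_vector.linear_add[OF a(4)] real_vector.linear_add[OF a(5)] real_vector.linear_add[OF a(6)]
      linear_cmul[OF a(1)] linear_cmul[OF a(2)] linear_cmul[OF a(3)]
      linear_cmul[OF a(4)] linear_cmul[OF a(5)] linear_cmul[OF a(6)] algebra_simps)
qed

lemma L_tau: "L g (tau_op T) = ltau (L g T)" by (simp add: L_def ltau_def tau_op_def)
lemma L_nu: "L g (nu_op T) = lnu (L g T)" by (simp add: L_def lnu_def nu_op_def)
lemma L_chi: "nondeg_sym_form g \<Longrightarrow> T \<in> PC \<Longrightarrow> L g (chi_op g T) = lchi (L g T)"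
  by (simp add: L_def lchi_def chi_char)
lemma L_alpha: "nondeg_sym_form g \<Longrightarrow> T \<in> PC \<Longrightarrow> L g (alpha_op g T) = lalpha (L g T)"
  by (simp add: L_def lalpha_def alpha_char)
lemma L_comb: "nondeg_sym_form g \<Longrightarrow> L g (pc_comb x T y S) = lcomb x (L g T) y (L g S)"
  by (simp add: L_def lcomb_def pc_comb_def real_vector.linear_add[OF nd_lin1] linear_cmul[OF nd_lin1])
lemma L_Cycl: "nondeg_sym_form g \<Longrightarrow> L g (Cycl T) = lcyc (L g T)"
  by (simp add: L_def lcyc_def Cycl_def real_vector.linear_add[OF nd_lin1])
lemma L_zero: "nondeg_sym_form g \<Longrightarrow> L g (\<lambda>u v w. 0) = (\<lambda>a b c d. 0)"
  by (simp add: L_def real_vector.linear_0[OF nd_lin1])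

definition okop :: "('a::euclidean_space \<Rightarrow> 'a \<Rightarrow> real) \<Rightarrow> ('a pc \<Rightarrow> 'a pc) \<Rightarrow> ('a lf \<Rightarrow> 'a lf) \<Rightarrow> bool" where
  "okop g B lB \<longleftrightarrow> (\<forall>T\<in>PC. B T \<in> PC \<and> L g (B T) = lB (L g T))"

lemma ok_tau: "okop g tau_op ltau" by (simp add: okop_def tau_PC L_tau)
lemma ok_nu: "okop g nu_op lnu" by (simp add: okop_def nu_PC L_nu)
lemma ok_chi: "nondeg_sym_form g \<Longrightarrow> okop g (chi_op g) lchi" by (simp add: okop_def chi_PC L_chi)
lemma ok_alpha: "nondeg_sym_form g \<Longrightarrow> okop g (alpha_op g) lalpha" by (simp add: okop_def alpha_PC L_alpha)
lemma ok_QP: "nondeg_sym_form g \<Longrightarrow> okop g B lB \<Longrightarrow> okop g (QP B) (lQP lB)"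
  by (simp add: okop_def QP_def lQP_def comb_PC L_comb)
lemma ok_QM: "nondeg_sym_form g \<Longrightarrow> okop g B lB \<Longrightarrow> okop g (QM B) (lQM lB)"
  by (simp add: okop_def QM_def lQM_def comb_PC L_comb)
lemma ok_comp: "okop g B lB \<Longrightarrow> okop g C lC \<Longrightarrow> okop g (B \<circ> C) (lB \<circ> lC)"
  by (simp add: okop_def)
lemma ok_Qplus: "nondeg_sym_form g \<Longrightarrow> okop g (Qplus g) lQplus"
  unfolding Qplus_def lQplus_def
  by (intro ok_comp ok_QP ok_QM ok_tau ok_chi ok_alpha ok_nu)
lemma ok_Qminus: "nondeg_sym_form g \<Longrightarrow> okop g (Qminus g) lQminus"
  unfolding Qminus_def lQminus_def
  by (intro ok_comp ok_QP ok_QM ok_tau ok_chi ok_alpha ok_nu)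
lemma ok_QJ: "nondeg_sym_form g \<Longrightarrow> okop g (QJ g) lQJ"
proof -
  assume g: "nondeg_sym_form g"
  have "okop g (Qplus g \<circ> nu_op \<circ> QM tau_op \<circ> nu_op \<circ> Qplus g) (lQplus \<circ> lnu \<circ> lQM ltau \<circ> lnu \<circ> lQplus)"
    using g by (intro ok_comp ok_QP ok_QM ok_tau ok_nu ok_Qplus)
  then show ?thesis using g by (simp add: okop_def QJ_def lQJ_def comb_PC L_comb)
qed
lemma ok_QR: "nondeg_sym_form g \<Longrightarrow> okop g (QR g) lQR"
proof -
  assume g: "nondeg_sym_form g"
  have "okop g (Qminus g \<circ> nu_op \<circ> QP tau_op \<circ> nu_op \<circ> Qminus g) (lQminus \<circ> lnu \<circ> lQP ltau \<circ> lnu \<circ> lQminus)"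
    using g by (intro ok_comp ok_QP ok_QM ok_tau ok_nu ok_Qminus)
  then show ?thesis using g by (simp add: okop_def QR_def lQR_def comb_PC L_comb)
qed


definition NJ :: "'a lf \<Rightarrow> 'a lf" where "NJ f = (\<lambda>a b c d. (1/12) * f a b c d + (1/12) * f a b d c + (-1/24) * f a c b d + (-1/24) * f a c d b + (-1/24) * f a d b c + (-1/24) * f a d c b + (1/12) * f b a c d + (1/12) * f b a d c + (-1/24) * f b c a d + (-1/24) * f b c d a + (-1/24) * f b d a c + (-1/24) * f b d c a + (-1/24) * f c a b d + (-1/24) * f c a d b + (-1/24) * f c b a d + (-1/24) * f c b d a + (1/12) * f c d a b + (1/12) * f c d b a + (-1/24) * f d a b c + (-1/24) * f d a c b + (-1/24) * f d b a c + (-1/24) * f d b c a + (1/12) * f d c a b + (1/12) * f d c b a)"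
definition NR :: "'a lf \<Rightarrow> 'a lf" where "NR f = (\<lambda>a b c d. (1/12) * f a b c d + (-1/12) * f a b d c + (1/24) * f a c b d + (-1/24) * f a c d b + (-1/24) * f a d b c + (1/24) * f a d c b + (-1/12) * f b a c d + (1/12) * f b a d c + (-1/24) * f b c a d + (1/24) * f b c d a + (1/24) * f b d a c + (-1/24) * f b d c a + (-1/24) * f c a b d + (1/24) * f c a d b + (1/24) * f c b a d + (-1/24) * f c b d a + (1/12) * f c d a b + (-1/12) * f c d b a + (1/24) * f d a b c + (-1/24) * f d a c b + (-1/24) * f d b a c + (1/24) * f d b c a + (-1/12) * f d c a b + (1/12) * f d c b a)"
lemma lQJ_eq: "lQJ f = NJ f"
  by (intro ext) (simp add: lQJ_def NJ_def lQplus_def lQP_def lQM_def lcomb_def ltau_def lalpha_def lchi_def lnu_def algebra_simps)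
lemma lQR_eq: "lQR f = NR f"
  by (intro ext) (simp add: lQR_def NR_def lQminus_def lQP_def lQM_def lcomb_def ltau_def lalpha_def lchi_def lnu_def algebra_simps)
lemma NJ_chi: "lchi (NJ f) = NJ f"
  by (intro ext) (simp only: NJ_def lchi_def; linarith)
lemma NJ_tau: "ltau (NJ f) = NJ f"
  by (intro ext) (simp only: NJ_def ltau_def; linarith)
lemma NJ_cyc: "lcyc (NJ f) = (\<lambda>a b c d. 0)"
  by (intro ext) (simp only: NJ_def lcyc_def; linarith)
lemma NR_chi: "lchi (NR f) = NR f"
  by (intro ext) (simp only: NR_def lchi_def; linarith)
lemma NR_tau: "ltau (NR f) = (\<lambda>a b c d. - NR f a b c d)"
  by (intro ext) (simp only: NR_def ltau_def; linarith)
lemma NR_cyc: "lcyc (NR f) = (\<lambda>a b c d. 0)"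
  by (intro ext) (simp only: NR_def lcyc_def; linarith)
lemma NJ_rtau: "NJ (ltau f) = NJ f"
  by (intro ext) (simp only: NJ_def ltau_def; linarith)
lemma NJ_neg: "NJ (\<lambda>a b c d. - f a b c d) = (\<lambda>a b c d. - NJ f a b c d)"
  by (intro ext) (simp only: NJ_def; linarith)
lemma NJ_kill: assumes "ltau f = (\<lambda>a b c d. - f a b c d)" shows "NJ f = (\<lambda>a b c d. 0)"
proof -
  have "NJ f = NJ (ltau f)" by (simp only: NJ_rtau)
  also have "\<dots> = (\<lambda>a b c d. - NJ f a b c d)" by (simp only: assms NJ_neg)
  finally have e: "NJ f = (\<lambda>a b c d. - NJ f a b c d)" .
  show ?thesis
  proof (intro ext)
    fix a b c d have "NJ f a b c d = - NJ f a b c d" using e by metis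
    then show "NJ f a b c d = 0" by simp
  qed
qed

lemma NJ_fix:
  assumes ht: "\<And>a b c d. f b a c d = f a b c d" and hc: "\<And>a b c d. f c d a b = f a b c d"
    and hcy: "\<And>a b c d. f a b c d + f b c a d + f c a b d = 0"
  shows "NJ f = f"
proof (intro ext)
  fix a b c d
  have ha: "\<And>a b c d. f a b d c = f a b c d" by (metis ht hc)
  have e1: "f b a c d = f a b c d" by (rule ht)
  have e2: "f a b d c = f a b c d" by (rule ha)
  have e3: "f c d a b = f a b c d" by (rule hc)
  have e4: "f b a d c = f b a c d" by (rule ha)
  have e5: "f c d b a = f b a c d" by (rule hc)
  have e6: "f d c a b = f a b d c" by (rule hc)
  have e7: "f d c b a = f b a d c" by (rule hc)
  have e8: "f c a b d = f a c b d" by (rule ht)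
  have e9: "f a c d b = f a c b d" by (rule ha)
  have e10: "f b d a c = f a c b d" by (rule hc)
  have e11: "f c a d b = f c a b d" by (rule ha)
  have e12: "f b d c a = f c a b d" by (rule hc)
  have e13: "f d b a c = f a c d b" by (rule hc)
  have e14: "f d b c a = f c a d b" by (rule hc)
  have e15: "f d a b c = f a d b c" by (rule ht)
  have e16: "f a d c b = f a d b c" by (rule ha)
  have e17: "f b c a d = f a d b c" by (rule hc)
  have e18: "f d a c b = f d a b c" by (rule ha)
  have e19: "f b c d a = f d a b c" by (rule hc)
  have e20: "f c b a d = f a d c b" by (rule hc)
  have e21: "f c b d a = f d a c b" by (rule hc)
  have c1: "f a b c d + f b c a d + f c a b d = 0" by (rule hcy)
  show "NJ f a b c d = f a b c d" using c1 by (simp only: NJ_def e1 e2 e3 e4 e5 e6 e7 e8 e9 e10 e11 e12 e13 e14 e15 e16 e17 e18 e19 e20 e21)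
qed

lemma NR_fix:
  assumes ht: "\<And>a b c d. f b a c d = - f a b c d" and hc: "\<And>a b c d. f c d a b = f a b c d"
    and hcy: "\<And>a b c d. f a b c d + f b c a d + f c a b d = 0"
  shows "NR f = f"
proof (intro ext)
  fix a b c d
  have ha: "\<And>a b c d. f a b d c = - f a b c d" by (metis ht hc)
  have r1: "f b a c d = - f a b c d" by (rule ht)
  have r2: "f a b d c = - f a b c d" by (rule ha)
  have r3: "f c d a b = f a b c d" by (rule hc)
  have r4: "f b a d c = - f b a c d" by (rule ha)
  have r5: "f c d b a = f b a c d" by (rule hc)
  have r6: "f d c a b = f a b d c" by (rule hc)
  have r7: "f d c b a = f b a d c" by (rule hc)
  have r8: "f c a b d = - f a c b d" by (rule ht)
  have r9: "f a c d b = - f a c b d" by (rule ha)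
  have r10: "f b d a c = f a c b d" by (rule hc)
  have r11: "f c a d b = - f c a b d" by (rule ha)
  have r12: "f b d c a = f c a b d" by (rule hc)
  have r13: "f d b a c = f a c d b" by (rule hc)
  have r14: "f d b c a = f c a d b" by (rule hc)
  have r15: "f d a b c = - f a d b c" by (rule ht)
  have r16: "f a d c b = - f a d b c" by (rule ha)
  have r17: "f b c a d = f a d b c" by (rule hc)
  have r18: "f d a c b = - f d a b c" by (rule ha)
  have r19: "f b c d a = f d a b c" by (rule hc)
  have r20: "f c b a d = f a d c b" by (rule hc)
  have r21: "f c b d a = f d a c b" by (rule hc)
  have c1: "f a b c d + f b c a d + f c a b d = 0" by (rule hcy)
  show "NR f a b c d = f a b c d" using c1 by (simp only: NR_def r1 r2 r3 r4 r5 r6 r7 r8 r9 r10 r11 r12 r13 r14 r15 r16 r17 r18 r19 r20 r21)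
qed


lemma gdual_prop:
  fixes g :: "'a::euclidean_space \<Rightarrow> 'a \<Rightarrow> real"
  assumes g: "nondeg_sym_form g" and i: "i \<in> Basis"
  shows "\<forall>j\<in>Basis. g (gdual g i) j = (if j = i then 1 else 0)"
proof -
  have lin: "linear (\<lambda>y. y \<bullet> i)" by (rule bounded_linear.linear[OF bounded_linear_inner_left])
  obtain z where z: "\<forall>x. g z x = x \<bullet> i" using riesz[OF g lin] by blast
  have P: "\<forall>j\<in>Basis. g z j = (if j = i then 1 else 0)" using z i by (simp add: inner_Basis)
  have U: "x = z" if "\<forall>j\<in>Basis. g x j = (if j = i then 1 else 0)" for x
  proof (rule nd_eq[OF g])
    fix y
    have "(\<lambda>y. g x y) = (\<lambda>y. g z y)"
      by (rule linear_eq_stdbasis[OF nd_lin2[OF g] nd_lin2[OF g]]) (use that P in auto)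
    then show "g x y = g z y" by metis
  qed
  have "gdual g i = z" unfolding gdual_def using P U by (rule the_equality)
  then show ?thesis using P by simp
qed

lemma g_expand:
  fixes g :: "'a::euclidean_space \<Rightarrow> 'a \<Rightarrow> real"
  assumes g: "nondeg_sym_form g"
  shows "g a b = (\<Sum>l\<in>Basis. g a l * g b (gdual g l))"
proof -
  have a: "a = (\<Sum>l\<in>Basis. g a l *\<^sub>R gdual g l)"
  proof (rule nd_eq[OF g])
    fix x
    have "(\<lambda>x. g a x) = (\<lambda>x. g (\<Sum>l\<in>Basis. g a l *\<^sub>R gdual g l) x)"
    proof (rule linear_eq_stdbasis[OF nd_lin2[OF g] nd_lin2[OF g]])
      fix m :: 'a assume m: "m \<in> Basis"
      have "g (\<Sum>l\<in>Basis. g a l *\<^sub>R gdual g l) m = (\<Sum>l\<in>Basis. g a l * g (gdual g l) m)"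
        by (simp add: real_vector.linear_sum[OF nd_lin1[OF g]] linear_cmul[OF nd_lin1[OF g]])
      also have "\<dots> = (\<Sum>l\<in>Basis. if l = m then g a l else 0)"
        using gdual_prop[OF g] m by (intro sum.cong) auto
      also have "\<dots> = g a m" using m by simp
      finally show "g a m = g (\<Sum>l\<in>Basis. g a l *\<^sub>R gdual g l) m" by simp
    qed
    then show "g a x = g (\<Sum>l\<in>Basis. g a l *\<^sub>R gdual g l) x" by metis
  qed
  have "g a b = g b a" by (rule nd_sym[OF g])
  also have "\<dots> = g b (\<Sum>l\<in>Basis. g a l *\<^sub>R gdual g l)" using a by simp
  also have "\<dots> = (\<Sum>l\<in>Basis. g a l * g b (gdual g l))"
    by (simp add: real_vector.linear_sum[OF nd_lin2[OF g]] linear_cmul[OF nd_lin2[OF g]])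
  finally show ?thesis .
qed

definition linner :: "('a::euclidean_space \<Rightarrow> 'a \<Rightarrow> real) \<Rightarrow> 'a lf \<Rightarrow> 'a lf \<Rightarrow> real" where
  "linner g f h = (\<Sum>(i,j,k,l)\<in>Basis \<times> Basis \<times> Basis \<times> Basis.
      f i j k l * h (gdual g i) (gdual g j) (gdual g k) (gdual g l))"

lemma pc_inner_linner:
  fixes g :: "'a::euclidean_space \<Rightarrow> 'a \<Rightarrow> real"
  assumes g: "nondeg_sym_form g"
  shows "pc_inner g T S = linner g (L g T) (L g S)"
proof -
  have "pc_inner g T S = (\<Sum>i\<in>Basis. \<Sum>j\<in>Basis. \<Sum>k\<in>Basis. \<Sum>l\<in>Basis.
      L g T i j k l * L g S (gdual g i) (gdual g j) (gdual g k) (gdual g l))"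
    unfolding pc_inner_def L_def by (subst g_expand[OF g]) (rule refl)
  also have "\<dots> = linner g (L g T) (L g S)"
    unfolding linner_def by (simp add: sum.cartesian_product split_def)
  finally show ?thesis .
qed

definition adjp :: "('a::euclidean_space \<Rightarrow> 'a \<Rightarrow> real) \<Rightarrow> ('a lf \<Rightarrow> 'a lf) \<Rightarrow> ('a lf \<Rightarrow> 'a lf) \<Rightarrow> bool" where
  "adjp g B C \<longleftrightarrow> (\<forall>f h. linner g (B f) h = linner g f (C h))"

lemma adj_tau: "adjp g ltau ltau"
  unfolding adjp_def linner_def ltau_def
  by (intro allI sum.reindex_bij_witness[of _ "\<lambda>(i,j,k,l). (j,i,k,l)" "\<lambda>(i,j,k,l). (j,i,k,l)"]) auto
lemma adj_alpha: "adjp g lalpha lalpha"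
  unfolding adjp_def linner_def lalpha_def
  by (intro allI sum.reindex_bij_witness[of _ "\<lambda>(i,j,k,l). (i,j,l,k)" "\<lambda>(i,j,k,l). (i,j,l,k)"]) auto
lemma adj_chi: "adjp g lchi lchi"
  unfolding adjp_def linner_def lchi_def
  by (intro allI sum.reindex_bij_witness[of _ "\<lambda>(i,j,k,l). (k,l,i,j)" "\<lambda>(i,j,k,l). (k,l,i,j)"]) auto
lemma adj_nu: "adjp g lnu lnu"
  unfolding adjp_def linner_def lnu_def
  by (intro allI sum.reindex_bij_witness[of _ "\<lambda>(i,j,k,l). (k,j,i,l)" "\<lambda>(i,j,k,l). (k,j,i,l)"]) auto

lemma linner_comb1: "linner g (lcomb x f y h) k = x * linner g f k + y * linner g h k"
  unfolding linner_def lcomb_def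
  by (simp add: split_def sum_distrib_left sum.distrib algebra_simps)
lemma linner_comb2: "linner g k (lcomb x f y h) = x * linner g k f + y * linner g k h"
  unfolding linner_def lcomb_def
  by (simp add: split_def sum_distrib_left sum.distrib algebra_simps)
lemma linner_neg2: "linner g k (\<lambda>a b c d. - h a b c d) = - linner g k h"
  unfolding linner_def by (simp add: split_def sum_negf)

lemma adj_QP: "adjp g B C \<Longrightarrow> adjp g (lQP B) (lQP C)"
  by (simp add: adjp_def lQP_def linner_comb1 linner_comb2)
lemma adj_QM: "adjp g B C \<Longrightarrow> adjp g (lQM B) (lQM C)"
  by (simp add: adjp_def lQM_def linner_comb1 linner_comb2)
lemma adj_comp: "adjp g B B' \<Longrightarrow> adjp g C C' \<Longrightarrow> adjp g (B \<circ> C) (C' \<circ> B')"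
  by (simp add: adjp_def)

definition lQplus' :: "'a lf \<Rightarrow> 'a lf" where "lQplus' = lQP ltau \<circ> lQP lalpha \<circ> lQP lchi"
definition lQminus' :: "'a lf \<Rightarrow> 'a lf" where "lQminus' = lQM ltau \<circ> lQM lalpha \<circ> lQP lchi"

lemmas aQPt = adj_QP[OF adj_tau, unfolded adjp_def, rule_format]
lemmas aQPa = adj_QP[OF adj_alpha, unfolded adjp_def, rule_format]
lemmas aQPc = adj_QP[OF adj_chi, unfolded adjp_def, rule_format]
lemmas aQMt = adj_QM[OF adj_tau, unfolded adjp_def, rule_format]
lemmas aQMa = adj_QM[OF adj_alpha, unfolded adjp_def, rule_format]
lemmas anu = adj_nu[unfolded adjp_def, rule_format]

lemma adj_Qplus: "adjp g lQplus lQplus'"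
  unfolding lQplus_def lQplus'_def adjp_def by (simp add: aQPt aQPa aQPc)
lemma adj_Qminus: "adjp g lQminus lQminus'"
  unfolding lQminus_def lQminus'_def adjp_def by (simp add: aQMt aQMa aQPc)
lemmas aQplus = adj_Qplus[unfolded adjp_def, rule_format]
lemmas aQminus = adj_Qminus[unfolded adjp_def, rule_format]

lemma QJ'_eq: "lcomb (4/3) ((lQplus' \<circ> lnu \<circ> lQM ltau \<circ> lnu \<circ> lQplus') f) 0 f = NJ f"
  by (intro ext) (simp add: NJ_def lQplus'_def lQP_def lQM_def lcomb_def ltau_def lalpha_def lchi_def lnu_def algebra_simps)
lemma QR'_eq: "lcomb (4/3) ((lQminus' \<circ> lnu \<circ> lQP ltau \<circ> lnu \<circ> lQminus') f) 0 f = NR f"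
  by (intro ext) (simp add: NR_def lQminus'_def lQP_def lQM_def lcomb_def ltau_def lalpha_def lchi_def lnu_def algebra_simps)

lemma adj_NJ: "linner g (NJ f) h = linner g f (NJ h)"
proof -
  have A: "adjp g (lQplus \<circ> lnu \<circ> lQM ltau \<circ> lnu \<circ> lQplus) (lQplus' \<circ> lnu \<circ> lQM ltau \<circ> lnu \<circ> lQplus')"
    unfolding adjp_def by (simp add: aQplus anu aQMt)
  have "linner g (NJ f) h = linner g (lQJ f) h" by (simp add: lQJ_eq)
  also have "\<dots> = linner g f (lcomb (4/3) ((lQplus' \<circ> lnu \<circ> lQM ltau \<circ> lnu \<circ> lQplus') h) 0 h)"
    using A unfolding lQJ_def adjp_def by (simp add: linner_comb1 linner_comb2)
  also have "\<dots> = linner g f (NJ h)" by (simp only: QJ'_eq)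
  finally show ?thesis .
qed
lemma adj_NR: "linner g (NR f) h = linner g f (NR h)"
proof -
  have A: "adjp g (lQminus \<circ> lnu \<circ> lQP ltau \<circ> lnu \<circ> lQminus) (lQminus' \<circ> lnu \<circ> lQP ltau \<circ> lnu \<circ> lQminus')"
    unfolding adjp_def by (simp add: aQminus anu aQPt)
  have "linner g (NR f) h = linner g (lQR f) h" by (simp add: lQR_eq)
  also have "\<dots> = linner g f (lcomb (4/3) ((lQminus' \<circ> lnu \<circ> lQP ltau \<circ> lnu \<circ> lQminus') h) 0 h)"
    using A unfolding lQR_def adjp_def by (simp add: linner_comb1 linner_comb2)
  also have "\<dots> = linner g f (NR h)" by (simp only: QR'_eq)
  finally show ?thesis .
qed


lemma pw_tau: "ltau f = f \<Longrightarrow> f b a c d = f a b c d"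
proof - assume h: "ltau f = f" have "ltau f a b c d = f a b c d" by (simp add: h) then show ?thesis by (simp add: ltau_def) qed
lemma pw_taun: "ltau f = (\<lambda>a b c d. - f a b c d) \<Longrightarrow> f b a c d = - f a b c d"
proof - assume h: "ltau f = (\<lambda>a b c d. - f a b c d)" have "ltau f a b c d = - f a b c d" by (simp add: h) then show ?thesis by (simp add: ltau_def) qed
lemma pw_chi: "lchi f = f \<Longrightarrow> f c d a b = f a b c d"
proof - assume h: "lchi f = f" have "lchi f a b c d = f a b c d" by (simp add: h) then show ?thesis by (simp add: lchi_def) qed
lemma pw_cyc: "lcyc f = (\<lambda>a b c d. 0) \<Longrightarrow> f a b c d + f b c a d + f c a b d = 0"
proof - assume h: "lcyc f = (\<lambda>a b c d. 0)" have "lcyc f a b c d = 0" by (simp add: h) then show ?thesis by (simp add: lcyc_def) qed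

lemma L_neg: "nondeg_sym_form g \<Longrightarrow> L g (\<lambda>u v w. - T u v w) = (\<lambda>a b c d. - L g T a b c d)"
  by (simp add: L_def real_vector.linear_neg[OF nd_lin1])

lemma okJ: assumes "nondeg_sym_form g" "T \<in> PC" shows "QJ g T \<in> PC \<and> L g (QJ g T) = NJ (L g T)"
  using ok_QJ[OF assms(1)] assms(2) unfolding okop_def by (simp add: lQJ_eq)
lemma okR: assumes "nondeg_sym_form g" "T \<in> PC" shows "QR g T \<in> PC \<and> L g (QR g T) = NR (L g T)"
  using ok_QR[OF assms(1)] assms(2) unfolding okop_def by (simp add: lQR_eq)

lemma JC_iff:
  fixes g :: "'a::euclidean_space \<Rightarrow> 'a \<Rightarrow> real"
  assumes g: "nondeg_sym_form g"
  shows "T \<in> JC g \<longleftrightarrow> T \<in> PC \<and> ltau (L g T) = L g T \<and> lchi (L g T) = L g T \<and> lcyc (L g T) = (\<lambda>a b c d. 0)"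
proof -
  have "T \<in> PC \<Longrightarrow> (Cycl T = (\<lambda>u v w. 0) \<longleftrightarrow> lcyc (L g T) = (\<lambda>a b c d. 0))"
    using L_inj[OF g] L_Cycl[OF g] L_zero[OF g] by metis
  moreover have "T \<in> PC \<Longrightarrow> (chi_op g T = T \<longleftrightarrow> lchi (L g T) = L g T)"
    using L_inj[OF g] L_chi[OF g] by metis
  moreover have "(tau_op T = T \<longleftrightarrow> ltau (L g T) = L g T)"
    using L_inj[OF g] L_tau by metis
  ultimately show ?thesis unfolding JC_def by blast
qed

lemma RC_iff:
  fixes g :: "'a::euclidean_space \<Rightarrow> 'a \<Rightarrow> real"
  assumes g: "nondeg_sym_form g"
  shows "T \<in> RC g \<longleftrightarrow> T \<in> PC \<and> ltau (L g T) = (\<lambda>a b c d. - L g T a b c d) \<and> lchi (L g T) = L g T \<and> lcyc (L g T) = (\<lambda>a b c d. 0)"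
proof -
  have "T \<in> PC \<Longrightarrow> (Cycl T = (\<lambda>u v w. 0) \<longleftrightarrow> lcyc (L g T) = (\<lambda>a b c d. 0))"
    using L_inj[OF g] L_Cycl[OF g] L_zero[OF g] by metis
  moreover have "T \<in> PC \<Longrightarrow> (chi_op g T = T \<longleftrightarrow> lchi (L g T) = L g T)"
    using L_inj[OF g] L_chi[OF g] by metis
  moreover have "(tau_op T = (\<lambda>u v w. - T u v w) \<longleftrightarrow> ltau (L g T) = (\<lambda>a b c d. - L g T a b c d))"
    using L_inj[OF g] L_tau L_neg[OF g] by metis
  ultimately show ?thesis unfolding RC_def by blast
qed

lemma QJ_in:
  fixes g :: "'a::euclidean_space \<Rightarrow> 'a \<Rightarrow> real"
  assumes g: "nondeg_sym_form g" and T: "T \<in> PC" shows "QJ g T \<in> JC g"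
  using okJ[OF g T] by (simp add: JC_iff[OF g] NJ_chi NJ_tau NJ_cyc)
lemma QR_in:
  fixes g :: "'a::euclidean_space \<Rightarrow> 'a \<Rightarrow> real"
  assumes g: "nondeg_sym_form g" and T: "T \<in> PC" shows "QR g T \<in> RC g"
  using okR[OF g T] by (simp add: RC_iff[OF g] NR_chi NR_tau NR_cyc)

lemma QJ_fix:
  fixes g :: "'a::euclidean_space \<Rightarrow> 'a \<Rightarrow> real"
  assumes g: "nondeg_sym_form g" and T: "T \<in> JC g" shows "QJ g T = T"
proof -
  from T have P: "T \<in> PC" and a: "ltau (L g T) = L g T" "lchi (L g T) = L g T" "lcyc (L g T) = (\<lambda>a b c d. 0)"
    by (auto simp: JC_iff[OF g])
  have "NJ (L g T) = L g T"
    by (rule NJ_fix) (rule pw_tau[OF a(1)], rule pw_chi[OF a(2)], rule pw_cyc[OF a(3)])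
  then show ?thesis using okJ[OF g P] L_inj[OF g] by metis
qed
lemma QR_fix:
  fixes g :: "'a::euclidean_space \<Rightarrow> 'a \<Rightarrow> real"
  assumes g: "nondeg_sym_form g" and T: "T \<in> RC g" shows "QR g T = T"
proof -
  from T have P: "T \<in> PC" and a: "ltau (L g T) = (\<lambda>a b c d. - L g T a b c d)" "lchi (L g T) = L g T" "lcyc (L g T) = (\<lambda>a b c d. 0)"
    by (auto simp: RC_iff[OF g])
  have "NR (L g T) = L g T"
    by (rule NR_fix) (rule pw_taun[OF a(1)], rule pw_chi[OF a(2)], rule pw_cyc[OF a(3)])
  then show ?thesis using okR[OF g P] L_inj[OF g] by metis
qed

theorem mainTheorem16:
  fixes g :: "'a::euclidean_space \<Rightarrow> 'a \<Rightarrow> real"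
  assumes "nondeg_sym_form g"
  shows "(\<forall>T\<in>PC. QJ g (QJ g T) = QJ g T)
       \<and> (\<forall>T\<in>PC. QR g (QR g T) = QR g T)
       \<and> (\<forall>T\<in>PC. \<forall>S\<in>PC. pc_inner g (QJ g T) S = pc_inner g T (QJ g S))
       \<and> (\<forall>T\<in>PC. \<forall>S\<in>PC. pc_inner g (QR g T) S = pc_inner g T (QR g S))
       \<and> QJ g ` PC = JC g
       \<and> QR g ` PC = RC g
       \<and> (\<forall>T\<in>PC. QJ g (QR g T) = (\<lambda>u v w. 0))
       \<and> (\<forall>T\<in>JC g. \<forall>S\<in>RC g. pc_inner g T S = 0)"
proof -
  note g = assms
  have A: "\<forall>T\<in>PC. QJ g (QJ g T) = QJ g T" using QJ_fix[OF g] QJ_in[OF g] by blast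
  have B: "\<forall>T\<in>PC. QR g (QR g T) = QR g T" using QR_fix[OF g] QR_in[OF g] by blast
  have C: "\<forall>T\<in>PC. \<forall>S\<in>PC. pc_inner g (QJ g T) S = pc_inner g T (QJ g S)"
    using okJ[OF g] by (simp add: pc_inner_linner[OF g] adj_NJ)
  have D: "\<forall>T\<in>PC. \<forall>S\<in>PC. pc_inner g (QR g T) S = pc_inner g T (QR g S)"
    using okR[OF g] by (simp add: pc_inner_linner[OF g] adj_NR)
  have E: "QJ g ` PC = JC g"
  proof
    show "QJ g ` PC \<subseteq> JC g" using QJ_in[OF g] by blast
    show "JC g \<subseteq> QJ g ` PC"
    proof
      fix T assume T: "T \<in> JC g"
      then have "T \<in> PC" by (simp add: JC_def)
      then show "T \<in> QJ g ` PC" using QJ_fix[OF g T] by (metis image_eqI)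
    qed
  qed
  have F: "QR g ` PC = RC g"
  proof
    show "QR g ` PC \<subseteq> RC g" using QR_in[OF g] by blast
    show "RC g \<subseteq> QR g ` PC"
    proof
      fix T assume T: "T \<in> RC g"
      then have "T \<in> PC" by (simp add: RC_def)
      then show "T \<in> QR g ` PC" using QR_fix[OF g T] by (metis image_eqI)
    qed
  qed
  have G: "\<forall>T\<in>PC. QJ g (QR g T) = (\<lambda>u v w. 0)"
  proof
    fix T :: "'a pc" assume T: "T \<in> PC"
    define X where "X = QR g T"
    have X: "X \<in> RC g" using QR_in[OF g T] X_def by simp
    then have XP: "X \<in> PC" and t: "ltau (L g X) = (\<lambda>a b c d. - L g X a b c d)" by (auto simp: RC_iff[OF g])
    have "L g (QJ g X) = L g (\<lambda>u v w. 0)"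
      using okJ[OF g XP] NJ_kill[OF t] L_zero[OF g] by simp
    then show "QJ g (QR g T) = (\<lambda>u v w. 0)" using L_inj[OF g] X_def by metis
  qed
  have H: "\<forall>T\<in>JC g. \<forall>S\<in>RC g. pc_inner g T S = 0"
  proof (intro ballI)
    fix T S :: "'a pc" assume T: "T \<in> JC g" and S: "S \<in> RC g"
    have t: "ltau (L g T) = L g T" using T by (simp add: JC_iff[OF g])
    have s: "ltau (L g S) = (\<lambda>a b c d. - L g S a b c d)" using S by (simp add: RC_iff[OF g])
    have "linner g (L g T) (L g S) = linner g (ltau (L g T)) (L g S)" by (simp add: t)
    also have "\<dots> = linner g (L g T) (ltau (L g S))" using adj_tau unfolding adjp_def by blast
    also have "\<dots> = - linner g (L g T) (L g S)" by (simp add: s linner_neg2)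
    finally show "pc_inner g T S = 0" by (simp add: pc_inner_linner[OF g])
  qed
  show ?thesis using A B C D E F G H by blast
qed

end
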